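(* Let $q\ge 7$ and $s\in[1,7]$ be integers, $C$ a finite set with $|C|=2q+s$, and $M\in\mathcal M(6,q,C)$. If $\{i,j,k,l,m,n\}=\{1,\dots,6\}$ and $r(i,j,k)\ge 1$, then $r(l,m,n)\le 9$.
   Context: $\mathcal M(6,q,C)$ is the set of $6\times q$ matrices $M$ with entries from $C$ such that each row has $q$ pairwise distinct entries, each column has $6$ pairwise distinct entries, and every pair of distinct colours of $C$ appears together in some row or some column of $M$. The frequency of a colour is the number of entries of $M$ equal to it. For three distinct rows $a,b,c$, $r(a,b,c)$ is the number of colours of frequency exactly $3$ appearing in each of the rows $a,b,c$. *)

theory Defs
  imports Main
begin

text \<open>A 6 x q matrix is a function M :: nat => nat => 'c; rows are indexed by
  {0..<6} and columns by {0..<q} (row i of the paper is row i-1 here).\<close>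

definition in_row :: "(nat \<Rightarrow> nat \<Rightarrow> 'c) \<Rightarrow> nat \<Rightarrow> nat \<Rightarrow> 'c \<Rightarrow> bool" where
  "in_row M q a x \<longleftrightarrow> (\<exists>b<q. M a b = x)"

definition in_col :: "(nat \<Rightarrow> nat \<Rightarrow> 'c) \<Rightarrow> nat \<Rightarrow> nat \<Rightarrow> 'c \<Rightarrow> bool" where
  "in_col M p b x \<longleftrightarrow> (\<exists>a<p. M a b = x)"

definition matM :: "nat \<Rightarrow> nat \<Rightarrow> 'c set \<Rightarrow> (nat \<Rightarrow> nat \<Rightarrow> 'c) \<Rightarrow> bool" where
  "matM p q C M \<longleftrightarrow>
     (\<forall>a<p. \<forall>b<q. M a b \<in> C) \<and>
     (\<forall>a<p. inj_on (M a) {0..<q}) \<and>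
     (\<forall>b<q. inj_on (\<lambda>a. M a b) {0..<p}) \<and>
     (\<forall>x\<in>C. \<forall>y\<in>C. x \<noteq> y \<longrightarrow>
        (\<exists>a<p. in_row M q a x \<and> in_row M q a y) \<or>
        (\<exists>b<q. in_col M p b x \<and> in_col M p b y))"

definition freq :: "nat \<Rightarrow> nat \<Rightarrow> (nat \<Rightarrow> nat \<Rightarrow> 'c) \<Rightarrow> 'c \<Rightarrow> nat" where
  "freq p q M x = card {(a, b). a < p \<and> b < q \<and> M a b = x}"

definition rcount :: "nat \<Rightarrow> 'c set \<Rightarrow> (nat \<Rightarrow> nat \<Rightarrow> 'c) \<Rightarrow> nat \<Rightarrow> nat \<Rightarrow> nat \<Rightarrow> nat" where
  "rcount q C M a b c = card {x \<in> C. freq 6 q M x = 3 \<and>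
       in_row M q a x \<and> in_row M q b x \<and> in_row M q c x}"

end

theory Submission
  imports Defs
begin

lemma pos_fin: "finite {(a, b). a < (p::nat) \<and> b < (q::nat) \<and> M a b = x}"
  by (rule finite_subset[of _ "{0..<p} \<times> {0..<q}"]) auto

lemma freq3_rows:
  assumes "freq 6 q M x = 3" "in_row M q a x" "in_row M q b x" "in_row M q c x"
    "a < 6" "b < 6" "c < 6" "a \<noteq> b" "a \<noteq> c" "b \<noteq> c"
    "a' < 6" "b' < q" "M a' b' = x"
  shows "a' \<in> {a, b, c}"
proof (rule ccontr)
  assume na: "a' \<notin> {a, b, c}"
  let ?P = "{(a, b). a < 6 \<and> b < q \<and> M a b = x}"
  obtain b1 b2 b3 where "b1 < q" "M a b1 = x" "b2 < q" "M b b2 = x" "b3 < q" "M c b3 = x"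
    using assms(2-4) unfolding in_row_def by blast
  then have sub: "{(a', b'), (a, b1), (b, b2), (c, b3)} \<subseteq> ?P" using assms by auto
  have "card {(a', b'), (a, b1), (b, b2), (c, b3)} = 4" using na assms(8-10) by auto
  moreover have "card {(a', b'), (a, b1), (b, b2), (c, b3)} \<le> card ?P"
    by (rule card_mono[OF pos_fin sub])
  ultimately show False using assms(1) unfolding freq_def by simp
qed

theorem claim4:
  fixes q s :: nat and C :: "'c set" and M :: "nat \<Rightarrow> nat \<Rightarrow> 'c"
    and i j k l m n :: nat
  assumes "q \<ge> 7" and "1 \<le> s" and "s \<le> 7"
    and "finite C" and "card C = 2 * q + s"
    and "matM 6 q C M"
    and "{i, j, k, l, m, n} = {0..<6}"
    and "rcount q C M i j k \<ge> 1"
  shows "rcount q C M l m n \<le> 9"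
proof -
  have c6: "card {i, j, k, l, m, n} = 6" using assms(7) by simp
  have dist: "distinct [i, j, k, l, m, n]"
    by (rule card_distinct) (use c6 in simp)
  have ne: "i \<noteq> j" "i \<noteq> k" "i \<noteq> l" "i \<noteq> m" "i \<noteq> n" "j \<noteq> k" "j \<noteq> l" "j \<noteq> m" "j \<noteq> n"
    "k \<noteq> l" "k \<noteq> m" "k \<noteq> n" "l \<noteq> m" "l \<noteq> n" "m \<noteq> n" using dist by simp_all
  have ss: "{i, j, k, l, m, n} \<subseteq> {0..<6}" using assms(7) by (rule equalityD1)
  have lt: "i < 6" "j < 6" "k < 6" "l < 6" "m < 6" "n < 6" using ss by auto
  have covall: "\<forall>x\<in>C. \<forall>y\<in>C. x \<noteq> y \<longrightarrow>
        (\<exists>a<6. in_row M q a x \<and> in_row M q a y) \<or>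
        (\<exists>b<q. in_col M 6 b x \<and> in_col M 6 b y)"
    using assms(6) unfolding matM_def by (rule conjunct2[OF conjunct2[OF conjunct2]])
  have "{x \<in> C. freq 6 q M x = 3 \<and> in_row M q i x \<and> in_row M q j x \<and> in_row M q k x} \<noteq> {}"
    using assms(8) unfolding rcount_def by (metis card.empty not_one_le_zero)
  then obtain x where x: "x \<in> C" "freq 6 q M x = 3" "in_row M q i x" "in_row M q j x" "in_row M q k x"
    by blast
  let ?P = "{(a, b). a < 6 \<and> b < q \<and> M a b = x}"
  let ?B = "snd ` ?P"
  have cB: "card ?B \<le> 3" using card_image_le[OF pos_fin, of snd 6 q M x] x(2)
    unfolding freq_def by simp
  have fB: "finite ?B" using pos_fin[of 6 q M x] by blast
  have sub: "{y \<in> C. freq 6 q M y = 3 \<and> in_row M q l y \<and> in_row M q m y \<and> in_row M q n y}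
      \<subseteq> (\<lambda>(a, b). M a b) ` ({l, m, n} \<times> ?B)"
  proof
    fix y assume "y \<in> {y \<in> C. freq 6 q M y = 3 \<and> in_row M q l y \<and> in_row M q m y \<and> in_row M q n y}"
    then have y: "y \<in> C" "freq 6 q M y = 3" "in_row M q l y" "in_row M q m y" "in_row M q n y"
      by auto
    have xr: "\<And>a' b'. a' < 6 \<Longrightarrow> b' < q \<Longrightarrow> M a' b' = x \<Longrightarrow> a' \<in> {i, j, k}"
      using freq3_rows[OF x(2-5) lt(1-3) ne(1,2,6)] by blast
    have yr: "\<And>a' b'. a' < 6 \<Longrightarrow> b' < q \<Longrightarrow> M a' b' = y \<Longrightarrow> a' \<in> {l, m, n}"
      using freq3_rows[OF y(2-5) lt(4-6) ne(13,14,15)] by blast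
    have "x \<noteq> y"
    proof
      assume "x = y"
      obtain b' where "b' < q" "M i b' = x" using x(3) unfolding in_row_def by blast
      then show False using yr[of i b'] lt ne \<open>x = y\<close> by auto
    qed
    then have cov: "(\<exists>a<6. in_row M q a x \<and> in_row M q a y) \<or>
        (\<exists>b<q. in_col M 6 b x \<and> in_col M 6 b y)"
      using covall x(1) y(1) by blast
    have "\<not> (\<exists>a<6. in_row M q a x \<and> in_row M q a y)"
    proof
      assume "\<exists>a<6. in_row M q a x \<and> in_row M q a y"
      then obtain a b1 b2 where "a < 6" "b1 < q" "M a b1 = x" "b2 < q" "M a b2 = y"
        unfolding in_row_def by blast
      then have "a \<in> {i, j, k}" "a \<in> {l, m, n}" using xr yr by auto
      then show False using ne by auto
    qed
    then obtain b where b: "b < q" "in_col M 6 b x" "in_col M 6 b y" using cov by blast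
    then obtain a1 a2 where "a1 < 6" "M a1 b = x" "a2 < 6" "M a2 b = y"
      unfolding in_col_def by blast
    then have "(a1, b) \<in> ?P" "a2 \<in> {l, m, n}" using b yr by auto
    then have "(a2, b) \<in> {l, m, n} \<times> ?B" by force
    then show "y \<in> (\<lambda>(a, b). M a b) ` ({l, m, n} \<times> ?B)"
      using \<open>M a2 b = y\<close> by force
  qed
  have "card ({l, m, n} \<times> ?B) \<le> 9"
  proof -
    have c3: "card {l, m, n} \<le> 3" using card_length[of "[l, m, n]"] by simp
    have "card ({l, m, n} \<times> ?B) = card {l, m, n} * card ?B" by (rule card_cartesian_product)
    also have "\<dots> \<le> 3 * 3" by (rule mult_le_mono[OF c3 cB])
    finally show ?thesis by simp
  qed
  moreover have "card {y \<in> C. freq 6 q M y = 3 \<and> in_row M q l y \<and> in_row M q m y \<and> in_row M q n y}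
      \<le> card ({l, m, n} \<times> ?B)"
    by (rule order.trans[OF card_mono[OF _ sub] card_image_le]) (use fB in auto)
  ultimately show ?thesis unfolding rcount_def by linarith
qed

end
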